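(* Let $C'$ be an odd-like binary Euclidean LCD $[n,k,d]$ code. Then there exist a binary Euclidean LCD $[n-1,k-1,d']$ code $C$ with $d'\ge d$, a generator matrix $G$ of $C$, and a vector $\mathbf{x}\in C^{\perp_E}$ of even Hamming weight, such that $C'$ is equivalent to the binary code with generator matrix $\begin{pmatrix}1&\mathbf{x}\\ \mathbf{0}&G\end{pmatrix}$.
   Context: A binary $[n,k,d]$ code is a $k$-dimensional subspace of $\mathbb{F}_2^n$ with minimum nonzero Hamming weight $d$. $C^{\perp_E}$ is the dual with respect to $\langle x,y\rangle_E=\sum x_iy_i$; $C$ is LCD if $C\cap C^{\perp_E}=\{0\}$. A vector $x\in\mathbb{F}_2^n$ is even-like if $\sum x_i=0$ and odd-like otherwise; a binary code is even-like if all its codewords are even-like, and odd-like otherwise. Two codes are equivalent if one is obtained from the other by a monomial transformation (for binary codes, a coordinate permutation). $\mathbf{0}$ denotes a zero column. *)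

theory Defs
  imports "HOL-Library.Z2" "HOL-Combinatorics.Permutations"
begin

text \<open>Binary vectors of length n are lists over the field bit = GF(2) of length n.\<close>

definition vzero :: "nat \<Rightarrow> bit list" where
  "vzero n = replicate n 0"

definition vadd :: "bit list \<Rightarrow> bit list \<Rightarrow> bit list" where
  "vadd x y = map2 (+) x y"

definition hwt :: "bit list \<Rightarrow> nat" where
  "hwt x = length (filter (\<lambda>a. a \<noteq> 0) x)"

definition eip :: "bit list \<Rightarrow> bit list \<Rightarrow> bit" where
  "eip x y = sum_list (map2 (*) x y)"

text \<open>Linear binary code of length n: an F2-subspace of F2^n (scalar multiplication
  over F2 is trivial, so closure under 0 and addition suffices).\<close>
definition lin_code :: "nat \<Rightarrow> bit list set \<Rightarrow> bool" where
  "lin_code n C \<longleftrightarrow> C \<subseteq> {v. length v = n} \<and> vzero n \<in> C \<and>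
     (\<forall>x\<in>C. \<forall>y\<in>C. vadd x y \<in> C)"

definition min_dist :: "nat \<Rightarrow> bit list set \<Rightarrow> nat" where
  "min_dist n C = Min (hwt ` (C - {vzero n}))"

text \<open>[n,k,d] binary linear code; a k-dimensional F2-subspace has exactly 2^k elements.
  For the zero code (k = 0) the minimum distance is undefined (conventionally infinite),
  so no condition on d is imposed then.\<close>
definition bin_code :: "nat \<Rightarrow> nat \<Rightarrow> nat \<Rightarrow> bit list set \<Rightarrow> bool" where
  "bin_code n k d C \<longleftrightarrow> lin_code n C \<and> card C = 2 ^ k \<and> (k > 0 \<longrightarrow> min_dist n C = d)"

definition euclid_dual :: "nat \<Rightarrow> bit list set \<Rightarrow> bit list set" where
  "euclid_dual n C = {y. length y = n \<and> (\<forall>x\<in>C. eip x y = 0)}"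

definition is_LCD :: "nat \<Rightarrow> bit list set \<Rightarrow> bool" where
  "is_LCD n C \<longleftrightarrow> C \<inter> euclid_dual n C = {vzero n}"

definition even_like_vec :: "bit list \<Rightarrow> bool" where
  "even_like_vec x \<longleftrightarrow> sum_list x = 0"

definition odd_like_code :: "bit list set \<Rightarrow> bool" where
  "odd_like_code C \<longleftrightarrow> (\<exists>c\<in>C. \<not> even_like_vec c)"

text \<open>Matrices are lists of rows. Linear combination of the rows with coefficients a.\<close>
definition lincomb :: "nat \<Rightarrow> bit list list \<Rightarrow> (nat \<Rightarrow> bit) \<Rightarrow> bit list" where
  "lincomb n M a = map (\<lambda>j. \<Sum>i<length M. a i * (M ! i ! j)) [0..<n]"

definition gen_code :: "nat \<Rightarrow> bit list list \<Rightarrow> bit list set" where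
  "gen_code n M = range (lincomb n M)"

definition is_gen_matrix :: "nat \<Rightarrow> bit list list \<Rightarrow> bit list set \<Rightarrow> bool" where
  "is_gen_matrix n M C \<longleftrightarrow> (\<forall>r\<in>set M. length r = n) \<and>
     (\<forall>a. lincomb n M a = vzero n \<longrightarrow> (\<forall>i<length M. a i = 0)) \<and>
     gen_code n M = C"

text \<open>Binary codes are equivalent iff they differ by a coordinate permutation.\<close>
definition perm_vec :: "nat \<Rightarrow> (nat \<Rightarrow> nat) \<Rightarrow> bit list \<Rightarrow> bit list" where
  "perm_vec n \<sigma> c = map (\<lambda>j. c ! \<sigma> j) [0..<n]"

definition code_equiv :: "nat \<Rightarrow> bit list set \<Rightarrow> bit list set \<Rightarrow> bool" where
  "code_equiv n C D \<longleftrightarrow> (\<exists>\<sigma>. \<sigma> permutes {..<n} \<and> C = perm_vec n \<sigma> ` D)"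

end

theory Submission
  imports Defs
begin

declare add_bit_eq_xor[simp del] mult_bit_eq_and[simp del]

lemma bit_cases2: "(b::bit) = 0 \<or> b = 1" by (cases b) auto
lemma bit_add_self[simp]: "(b::bit) + b = 0" by (cases b) auto
lemma bit_mult_self[simp]: "(b::bit) * b = b" by (cases b) auto
lemma bit_UNIV: "(UNIV :: bit set) = {0,1}" using bit_cases2 by auto
lemma card_bit: "card (UNIV :: bit set) = 2" by (simp add: bit_UNIV)

lemma length_vzero[simp]: "length (vzero n) = n" by (simp add: vzero_def)
lemma nth_vzero[simp]: "j < n \<Longrightarrow> vzero n ! j = 0" by (simp add: vzero_def)
lemma length_vadd[simp]: "length (vadd x y) = min (length x) (length y)" by (simp add: vadd_def)
lemma nth_vadd[simp]: "j < length x \<Longrightarrow> j < length y \<Longrightarrow> vadd x y ! j = x ! j + y ! j"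
  by (simp add: vadd_def)

lemma vadd_self: "vadd x x = vzero (length x)"
  by (rule nth_equalityI) auto
lemma vadd_comm: "vadd x y = vadd y x"
  by (rule nth_equalityI) (auto simp: add.commute)
lemma vadd_assoc: "vadd (vadd x y) z = vadd x (vadd y z)"
  by (rule nth_equalityI) (auto simp: add.assoc)
lemma vadd_zero: "length x = n \<Longrightarrow> vadd x (vzero n) = x"
  by (rule nth_equalityI) auto
lemma vadd_vadd_cancel: "length x = length y \<Longrightarrow> vadd x (vadd x y) = y"
  by (rule nth_equalityI) (auto simp flip: add.assoc)
lemma vadd_eq_zero: "length x = n \<Longrightarrow> length y = n \<Longrightarrow> vadd x y = vzero n \<Longrightarrow> x = y"
  by (metis vadd_vadd_cancel vadd_zero)

lemma eip_sum: "length x = n \<Longrightarrow> length y = n \<Longrightarrow> eip x y = (\<Sum>j<n. x ! j * y ! j)"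
  unfolding eip_def by (simp add: sum_list_sum_nth atLeast0LessThan)
lemma eip_comm: "length x = length y \<Longrightarrow> eip x y = eip y x"
  by (simp add: eip_sum mult.commute)
lemma eip_vadd: "length x = n \<Longrightarrow> length y = n \<Longrightarrow> length z = n \<Longrightarrow>
   eip x (vadd y z) = eip x y + eip x z"
  by (simp add: eip_sum distrib_left sum.distrib)
lemma eip_vzero: "length x = n \<Longrightarrow> eip x (vzero n) = 0"
  by (simp add: eip_sum)
lemma eip_self: "eip x x = sum_list x"
  unfolding eip_def by (induction x) auto

lemma sum_list_hwt: "sum_list x = of_nat (hwt x)"
  unfolding hwt_def by (induction x) (auto simp: bit_not_zero_iff)

lemma even_hwt: "even (hwt x) \<longleftrightarrow> sum_list x = 0"
proof -
  have "(of_nat m :: bit) = 0 \<longleftrightarrow> even m" for m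
    by (induction m) (auto simp: add.commute)
  then show ?thesis by (simp add: sum_list_hwt)
qed

lemma length_lincomb[simp]: "length (lincomb n M a) = n" by (simp add: lincomb_def)
lemma nth_lincomb[simp]: "j < n \<Longrightarrow> lincomb n M a ! j = (\<Sum>i<length M. a i * (M ! i ! j))"
  by (simp add: lincomb_def)

lemma lincomb_Nil[simp]: "lincomb n [] a = vzero n"
  by (rule nth_equalityI) auto

lemma lincomb_Cons: "length r = n \<Longrightarrow> lincomb n (r # L) a =
   (if a 0 = 0 then lincomb n L (\<lambda>i. a (Suc i)) else vadd r (lincomb n L (\<lambda>i. a (Suc i))))"
proof (rule nth_equalityI)
  fix j assume r: "length r = n" and j: "j < length (lincomb n (r # L) a)"
  then have j': "j < n" by simp
  have "lincomb n (r # L) a ! j = a 0 * r ! j + (\<Sum>i<length L. a (Suc i) * (L ! i ! j))"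
    using j' by (simp only: nth_lincomb length_Cons sum.lessThan_Suc_shift) simp
  then show "lincomb n (r # L) a ! j = (if a 0 = 0 then lincomb n L (\<lambda>i. a (Suc i)) else vadd r (lincomb n L (\<lambda>i. a (Suc i)))) ! j"
    using j' r by (cases "a 0 = 0") (auto simp: bit_not_zero_iff)
qed simp

lemma lincomb_in: "lin_code n C \<Longrightarrow> set M \<subseteq> C \<Longrightarrow> lincomb n M a \<in> C"
proof (induction M arbitrary: a)
  case Nil then show ?case by (simp add: lin_code_def)
next
  case (Cons r M)
  have "length r = n" using Cons.prems by (auto simp: lin_code_def)
  then show ?case using Cons by (auto simp: lincomb_Cons lin_code_def)
qed

lemma lincomb_add: "vadd (lincomb n M a) (lincomb n M b) = lincomb n M (\<lambda>i. a i + b i)"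
  by (rule nth_equalityI) (auto simp: distrib_right sum.distrib)

lemma lin_code_gen: "\<forall>r\<in>set M. length r = n \<Longrightarrow> lin_code n (gen_code n M)"
  unfolding lin_code_def gen_code_def
proof (intro conjI)
  show "vzero n \<in> range (lincomb n M)"
    by (rule range_eqI[of _ _ "\<lambda>_. 0"], rule nth_equalityI) auto
qed (auto simp: lincomb_add)

lemma gen_code_Cons: "length r = n \<Longrightarrow>
   gen_code n (r # L) = gen_code n L \<union> vadd r ` gen_code n L"
proof -
  assume r: "length r = n"
  show ?thesis
  proof (rule set_eqI, rule iffI)
    fix y assume "y \<in> gen_code n (r # L)"
    then obtain a where "y = lincomb n (r # L) a" by (auto simp: gen_code_def)
    then show "y \<in> gen_code n L \<union> vadd r ` gen_code n L"
      using r by (auto simp: lincomb_Cons gen_code_def split: if_splits)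
  next
    fix y assume "y \<in> gen_code n L \<union> vadd r ` gen_code n L"
    then obtain b where "y = lincomb n L b \<or> y = vadd r (lincomb n L b)"
      by (auto simp: gen_code_def)
    then obtain c where "y = (if c = (0::bit) then lincomb n L b else vadd r (lincomb n L b))"
      by (metis zero_neq_one)
    then have "y = lincomb n (r # L) (\<lambda>i. case i of 0 \<Rightarrow> c | Suc j \<Rightarrow> b j)"
      using r by (simp add: lincomb_Cons)
    then show "y \<in> gen_code n (r # L)" by (auto simp: gen_code_def)
  qed
qed

lemma eip_lincomb: "length c = n \<Longrightarrow> \<forall>r\<in>set M. length r = n \<Longrightarrow>
   eip c (lincomb n M a) = (\<Sum>i<length M. a i * eip c (M ! i))"
proof -
  assume c: "length c = n" and M: "\<forall>r\<in>set M. length r = n"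
  have "eip c (lincomb n M a) = (\<Sum>j<n. c ! j * (\<Sum>i<length M. a i * (M ! i ! j)))"
    using c by (simp add: eip_sum)
  also have "\<dots> = (\<Sum>i<length M. a i * (\<Sum>j<n. c ! j * (M ! i ! j)))"
    by (simp add: sum_distrib_left sum.swap[of _ "{..<n}"] mult.left_commute)
  finally show ?thesis using M c by (simp add: eip_sum)
qed

definition indep :: "nat \<Rightarrow> bit list list \<Rightarrow> bool" where
  "indep n G \<longleftrightarrow> (\<forall>a. lincomb n G a = vzero n \<longrightarrow> (\<forall>i<length G. a i = 0))"

lemma bit_add_eq0: "(b::bit) + c = 0 \<longleftrightarrow> b = c"
  by (cases b; cases c) auto

lemma basis_of_list: "\<forall>r\<in>set L. length r = n \<Longrightarrow>
  \<exists>G. (\<forall>r\<in>set G. length r = n) \<and> indep n G \<and> gen_code n G = gen_code n L"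
proof (induction L)
  case Nil then show ?case by (auto intro: exI[of _ "[]"] simp: indep_def)
next
  case (Cons r L)
  then obtain G where G: "\<forall>r\<in>set G. length r = n" "indep n G" "gen_code n G = gen_code n L" by auto
  have r: "length r = n" using Cons.prems by auto
  define S where "S = gen_code n L"
  have lc: "lin_code n S" unfolding S_def using Cons.prems by (intro lin_code_gen) auto
  have eq: "gen_code n (r # L) = S \<union> vadd r ` S" using r by (simp add: gen_code_Cons S_def)
  show ?case
  proof (cases "r \<in> S")
    case True
    then have "vadd r ` S \<subseteq> S" using lc by (auto simp: lin_code_def)
    then have "gen_code n (r # L) = S" using eq by auto
    then show ?thesis using G S_def by auto
  next
    case False
    have g: "gen_code n (r # G) = S \<union> vadd r ` S" using r G(3) by (simp add: gen_code_Cons S_def)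
    have "indep n (r # G)"
      unfolding indep_def
    proof (intro allI impI)
      fix a i assume z: "lincomb n (r # G) a = vzero n" and i: "i < length (r # G)"
      show "a i = 0"
      proof (cases "a 0 = 0")
        case True
        then have "lincomb n G (\<lambda>i. a (Suc i)) = vzero n" using z r by (simp add: lincomb_Cons)
        then have "\<forall>j<length G. a (Suc j) = 0" using G(2) unfolding indep_def by blast
        then show ?thesis using i True by (cases i) auto
      next
        case F: False
        then have "vadd r (lincomb n G (\<lambda>i. a (Suc i))) = vzero n" using z r by (simp add: lincomb_Cons)
        then have "r = lincomb n G (\<lambda>i. a (Suc i))" using vadd_eq_zero[OF r length_lincomb] by blast
        then have "r \<in> S" using G(3) S_def by (auto simp: gen_code_def)
        then show ?thesis using False by simp
      qed
    qed
    then show ?thesis using G(1) r g eq by (intro exI[of _ "r # G"]) auto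
  qed
qed

lemma lincomb_unit: "i < length M \<Longrightarrow> length (M ! i) = n \<Longrightarrow> lincomb n M (\<lambda>l. if l = i then 1 else 0) = M ! i"
proof (rule nth_equalityI)
  fix j assume "i < length M" "length (M ! i) = n" "j < length (lincomb n M (\<lambda>l. if l = i then 1 else 0))"
  then show "lincomb n M (\<lambda>l. if l = i then 1 else 0) ! j = M ! i ! j"
    by (simp add: if_distrib[of "\<lambda>x. x * _"] sum.If_cases Int_absorb1)
qed simp

lemma finite_bit[simp]: "finite (UNIV :: bit set)" by (simp add: bit_UNIV)

lemma finite_len: "finite {v :: bit list. length v = n}"
  using finite_lists_length_eq[of "UNIV :: bit set" n] by simp

lemma lin_code_finite: "lin_code n C \<Longrightarrow> finite C"
  unfolding lin_code_def using finite_len[of n] finite_subset by blast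

lemma gen_matrix_exists: "lin_code n C \<Longrightarrow> \<exists>G. is_gen_matrix n G C"
proof -
  assume lc: "lin_code n C"
  obtain L where L: "set L = C" using lin_code_finite[OF lc] finite_list by blast
  have len: "\<forall>r\<in>set L. length r = n" using lc L by (auto simp: lin_code_def)
  have "gen_code n L = C"
  proof
    show "gen_code n L \<subseteq> C" using lincomb_in[OF lc] L by (auto simp: gen_code_def)
    show "C \<subseteq> gen_code n L"
    proof
      fix c assume "c \<in> C"
      then obtain i where i: "i < length L" "c = L ! i" using L by (auto simp: in_set_conv_nth)
      then have "lincomb n L (\<lambda>l. if l = i then 1 else 0) = c" using len by (intro lincomb_unit[THEN trans]) auto
      then show "c \<in> gen_code n L" by (auto simp: gen_code_def)
    qed
  qed
  then show ?thesis using basis_of_list[OF len] by (auto simp: is_gen_matrix_def indep_def)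
qed

lemma lincomb_cong: "(\<And>i. i < length M \<Longrightarrow> a i = b i) \<Longrightarrow> lincomb n M a = lincomb n M b"
  unfolding lincomb_def by (auto intro!: sum.cong)

lemma gen_matrix_card: "is_gen_matrix n G C \<Longrightarrow> card C = 2 ^ length G"
proof -
  assume g: "is_gen_matrix n G C"
  define K where "K = length G"
  define Ls where "Ls = {l. set l \<subseteq> (UNIV::bit set) \<and> length l = K}"
  define f where "f l = lincomb n G (\<lambda>i. l ! i)" for l
  have "f ` Ls = C"
  proof
    show "f ` Ls \<subseteq> C" using g by (auto simp: f_def is_gen_matrix_def gen_code_def)
    show "C \<subseteq> f ` Ls"
    proof
      fix c assume "c \<in> C"
      then obtain a where a: "c = lincomb n G a" using g by (auto simp: is_gen_matrix_def gen_code_def)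
      have "f (map a [0..<K]) = c" unfolding f_def a by (rule lincomb_cong) (simp add: K_def)
      then show "c \<in> f ` Ls" unfolding Ls_def by (auto intro: image_eqI[of _ _ "map a [0..<K]"])
    qed
  qed
  moreover have "inj_on f Ls"
  proof (rule inj_onI)
    fix l l' assume l: "l \<in> Ls" "l' \<in> Ls" and e: "f l = f l'"
    have "lincomb n G (\<lambda>i. l ! i + l' ! i) = vzero n"
      using e by (simp add: f_def vadd_self flip: lincomb_add)
    then have "\<forall>i<K. l ! i + l' ! i = 0" using g by (auto simp: is_gen_matrix_def K_def)
    then show "l = l'" using l by (intro nth_equalityI) (auto simp: Ls_def bit_add_eq0)
  qed
  ultimately have "card C = card Ls" using card_image by fastforce
  also have "\<dots> = 2 ^ K" unfolding Ls_def using card_lists_length_eq[of "UNIV::bit set" K] by (simp add: card_bit)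
  finally show ?thesis by (simp add: K_def)
qed

lemma gen_rows_in: "is_gen_matrix n B C \<Longrightarrow> set B \<subseteq> C"
proof
  fix r assume g: "is_gen_matrix n B C" and r: "r \<in> set B"
  then obtain i where i: "i < length B" "r = B ! i" by (auto simp: in_set_conv_nth)
  then have "lincomb n B (\<lambda>l. if l = i then 1 else 0) = r" using g r
    by (intro lincomb_unit[THEN trans]) (auto simp: is_gen_matrix_def)
  then show "r \<in> C" using g by (auto simp: is_gen_matrix_def gen_code_def)
qed

lemma LCD_zero: "is_LCD n C \<Longrightarrow> y \<in> C \<Longrightarrow> length y = n \<Longrightarrow> (\<forall>c\<in>C. eip c y = 0) \<Longrightarrow> y = vzero n"
  unfolding is_LCD_def euclid_dual_def by blast

lemma repr:
  assumes lc: "lin_code n C" and lcd: "is_LCD n C" and i: "i < n"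
  shows "\<exists>u\<in>C. \<forall>c\<in>C. eip c u = c ! i"
proof -
  obtain B where g: "is_gen_matrix n B C" using gen_matrix_exists[OF lc] by blast
  have Bl: "\<forall>r\<in>set B. length r = n" using g by (simp add: is_gen_matrix_def)
  have Cl: "\<And>c. c \<in> C \<Longrightarrow> length c = n" using lc by (auto simp: lin_code_def)
  define K where "K = length B"
  define T where "T = {l. set l \<subseteq> (UNIV::bit set) \<and> length l = K}"
  define \<phi> where "\<phi> u = map (\<lambda>b. eip b u) B" for u
  have key: "eip c y = (\<Sum>j<K. a j * eip (B ! j) y)" if "c = lincomb n B a" "length y = n" for c y a
  proof -
    have "eip c y = eip y c" using that by (simp add: eip_comm)
    also have "\<dots> = (\<Sum>j<K. a j * eip y (B ! j))" using that Bl by (simp add: eip_lincomb K_def)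
    also have "\<dots> = (\<Sum>j<K. a j * eip (B ! j) y)"
      using that Bl by (intro sum.cong) (auto simp: K_def eip_comm)
    finally show ?thesis .
  qed
  have "inj_on \<phi> C"
  proof (rule inj_onI)
    fix u u' assume u: "u \<in> C" "u' \<in> C" and e: "\<phi> u = \<phi> u'"
    then have ej: "eip (B ! j) u = eip (B ! j) u'" if "j < K" for j
      using that by (metis K_def \<phi>_def nth_map)
    have "vadd u u' = vzero n"
    proof (rule LCD_zero[OF lcd])
      show "vadd u u' \<in> C" using u lc by (auto simp: lin_code_def)
      show "length (vadd u u') = n" using u Cl by auto
      show "\<forall>c\<in>C. eip c (vadd u u') = 0"
      proof
        fix c assume "c \<in> C"
        then obtain a where a: "c = lincomb n B a" using g by (auto simp: is_gen_matrix_def gen_code_def)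
        have "eip c (vadd u u') = (\<Sum>j<K. a j * eip (B ! j) (vadd u u'))"
          using key[OF a] u Cl by auto
        also have "\<dots> = 0"
          using ej u Cl Bl by (intro sum.neutral) (auto simp: eip_vadd K_def)
        finally show "eip c (vadd u u') = 0" .
      qed
    qed
    then show "u = u'" using vadd_eq_zero[of u n u'] u Cl by auto
  qed
  then have "card (\<phi> ` C) = card C" by (rule card_image)
  also have "\<dots> = 2 ^ K" using gen_matrix_card[OF g] K_def by simp
  also have "\<dots> = card T" unfolding T_def using card_lists_length_eq[of "UNIV::bit set" K] by (simp add: card_bit)
  finally have "\<phi> ` C = T"
    by (intro card_subset_eq) (auto simp: T_def \<phi>_def K_def finite_len)
  moreover have "map (\<lambda>b. b ! i) B \<in> T" by (simp add: T_def K_def)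
  ultimately obtain u where u: "u \<in> C" "\<phi> u = map (\<lambda>b. b ! i) B" by (metis imageE)
  have "\<forall>c\<in>C. eip c u = c ! i"
  proof
    fix c assume "c \<in> C"
    then obtain a where a: "c = lincomb n B a" using g by (auto simp: is_gen_matrix_def gen_code_def)
    have "eip c u = (\<Sum>j<K. a j * eip (B ! j) u)" using key[OF a] u Cl by auto
    also have "\<dots> = (\<Sum>j<K. a j * (B ! j ! i))"
    proof (rule sum.cong)
      fix j assume "j \<in> {..<K}"
      then have "\<phi> u ! j = map (\<lambda>b. b ! i) B ! j" using u(2) by simp
      then show "a j * eip (B ! j) u = a j * (B ! j ! i)" using \<open>j \<in> {..<K}\<close> by (simp add: \<phi>_def K_def)
    qed simp
    also have "\<dots> = c ! i" using a i by (simp add: K_def)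
    finally show "eip c u = c ! i" .
  qed
  then show ?thesis using u by blast
qed

lemma odd_coord:
  assumes lc: "lin_code n C" and lcd: "is_LCD n C" and odd: "odd_like_code C"
  shows "\<exists>i<n. \<exists>v\<in>C. v ! i = 1 \<and> (\<forall>c\<in>C. eip c v = c ! i)"
proof (rule ccontr)
  assume neg: "\<not> ?thesis"
  have Cl: "\<And>c. c \<in> C \<Longrightarrow> length c = n" using lc by (auto simp: lin_code_def)
  define u where "u i = (SOME v. v \<in> C \<and> (\<forall>c\<in>C. eip c v = c ! i))" for i
  have u: "u i \<in> C \<and> (\<forall>c\<in>C. eip c (u i) = c ! i)" if "i < n" for i
    unfolding u_def using repr[OF lc lcd that] by (rule someI2_bex) auto
  have u0: "u i ! i = 0" if "i < n" for i using u[OF that] neg that by auto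
  obtain c where c: "c \<in> C" "sum_list c \<noteq> 0" using odd by (auto simp: odd_like_code_def even_like_vec_def)
  define U where "U = map u [0..<n]"
  define w where "w = lincomb n U (\<lambda>i. c ! i)"
  have Ul: "\<forall>r\<in>set U. length r = n" using u Cl by (auto simp: U_def)
  have wC: "w \<in> C" unfolding w_def using u by (intro lincomb_in[OF lc]) (auto simp: U_def)
  have "vadd c w = vzero n"
  proof (rule LCD_zero[OF lcd])
    show "vadd c w \<in> C" using c wC lc by (auto simp: lin_code_def)
    show "length (vadd c w) = n" using c Cl by (simp add: w_def)
    show "\<forall>c'\<in>C. eip c' (vadd c w) = 0"
    proof
      fix c' assume c': "c' \<in> C"
      have "eip c' w = (\<Sum>i<n. c ! i * eip c' (U ! i))"
        using Cl[OF c'] Ul by (simp add: w_def eip_lincomb U_def)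
      also have "\<dots> = (\<Sum>i<n. c ! i * c' ! i)"
        using u c' by (intro sum.cong) (auto simp: U_def)
      also have "\<dots> = eip c' c" using Cl c c' by (simp add: eip_sum mult.commute)
      finally have "eip c' w = eip c' c" .
      then show "eip c' (vadd c w) = 0" using Cl c' c wC by (simp add: eip_vadd)
    qed
  qed
  then have cw: "c = w" by (rule vadd_eq_zero[OF Cl[OF c(1)] Cl[OF wC]])
  have "sum_list w = (\<Sum>j<n. \<Sum>i<n. c ! i * (u i ! j))"
    by (simp add: sum_list_sum_nth atLeast0LessThan w_def U_def)
  also have "\<dots> = (\<Sum>i<n. c ! i * (\<Sum>j<n. u i ! j))"
    unfolding sum_distrib_left by (rule sum.swap)
  also have "\<dots> = (\<Sum>i<n. c ! i * sum_list (u i))"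
    using u Cl by (intro sum.cong) (auto simp: sum_list_sum_nth atLeast0LessThan)
  also have "\<dots> = 0"
    using u u0 by (intro sum.neutral) (auto simp flip: eip_self)
  finally show False using c cw by simp
qed

definition del :: "nat \<Rightarrow> bit list \<Rightarrow> bit list" where
  "del i c = take i c @ drop (Suc i) c"

lemma length_del[simp]: "i < length c \<Longrightarrow> length (del i c) = length c - 1"
  by (simp add: del_def)

lemma nth_del: "i < length c \<Longrightarrow> j < length c - 1 \<Longrightarrow> del i c ! j = c ! (if j < i then j else Suc j)"
  by (auto simp: del_def nth_append)

lemma del_vzero: "i < n \<Longrightarrow> del i (vzero n) = vzero (n - 1)"
  by (rule nth_equalityI) (auto simp: nth_del)

lemma del_vadd: "i < n \<Longrightarrow> length a = n \<Longrightarrow> length b = n \<Longrightarrow> del i (vadd a b) = vadd (del i a) (del i b)"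
  by (rule nth_equalityI) (auto simp: nth_del)

lemma sum_list_del: "i < length c \<Longrightarrow> sum_list c = sum_list (del i c) + c ! i"
proof -
  assume i: "i < length c"
  have "sum_list c = sum_list (take i c @ c ! i # drop (Suc i) c)" using id_take_nth_drop[OF i] by simp
  then show ?thesis by (simp add: del_def add_ac)
qed

lemma eip_del: "i < n \<Longrightarrow> length a = n \<Longrightarrow> length b = n \<Longrightarrow> eip a b = eip (del i a) (del i b) + a ! i * b ! i"
proof -
  assume i: "i < n" and a: "length a = n" and b: "length b = n"
  have m: "map2 (*) (del i a) (del i b) = del i (map2 (*) a b)"
    using i a b by (intro nth_equalityI) (auto simp: nth_del)
  show ?thesis unfolding eip_def m using sum_list_del[of i "map2 (*) a b"] i a b by simp
qed

lemma hwt_del: "i < length c \<Longrightarrow> c ! i = 0 \<Longrightarrow> hwt (del i c) = hwt c"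
proof -
  assume i: "i < length c" and z: "c ! i = 0"
  have "hwt c = hwt (take i c @ c ! i # drop (Suc i) c)" using id_take_nth_drop[OF i] by simp
  then show ?thesis using z by (simp add: hwt_def del_def)
qed

lemma del_inj: "i < n \<Longrightarrow> length a = n \<Longrightarrow> length b = n \<Longrightarrow> a ! i = b ! i \<Longrightarrow> del i a = del i b \<Longrightarrow> a = b"
proof (rule nth_equalityI)
  fix j assume i: "i < n" and a: "length a = n" and b: "length b = n" and ab: "a ! i = b ! i"
    and d: "del i a = del i b" and j: "j < length a"
  show "a ! j = b ! j"
  proof (cases "j = i")
    case False
    define j' where "j' = (if j < i then j else j - 1)"
    have "j' < n - 1" using j a False i by (auto simp: j'_def)
    then have "del i a ! j' = del i b ! j'" using d by simp
    then show ?thesis using a b i \<open>j' < n - 1\<close> False by (auto simp: nth_del j'_def split: if_splits)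
  qed (use ab in simp)
qed simp

definition sig :: "nat \<Rightarrow> nat \<Rightarrow> nat" where
  "sig i j = (if j = i then 0 else if j < i then Suc j else j)"

lemma sig_permutes: "i < n \<Longrightarrow> sig i permutes {..<n}"
proof (rule bij_imp_permutes)
  assume i: "i < n"
  have inj: "inj_on (sig i) {..<n}" by (auto simp: inj_on_def sig_def split: if_splits)
  have "sig i ` {..<n} \<subseteq> {..<n}" using i by (auto simp: sig_def)
  then have "sig i ` {..<n} = {..<n}" using inj by (intro endo_inj_surj) auto
  then show "bij_betw (sig i) {..<n} {..<n}" using inj by (simp add: bij_betw_def)
  show "\<And>x. x \<notin> {..<n} \<Longrightarrow> sig i x = x" using i by (auto simp: sig_def)
qed

lemma perm_sig: "i < n \<Longrightarrow> length c = n \<Longrightarrow> perm_vec n (sig i) (c ! i # del i c) = c"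
proof (rule nth_equalityI)
  fix j assume i: "i < n" and c: "length c = n" and j: "j < length (perm_vec n (sig i) (c ! i # del i c))"
  then have j': "j < n" by (simp add: perm_vec_def)
  have "perm_vec n (sig i) (c ! i # del i c) ! j = (c ! i # del i c) ! sig i j"
    using j' by (simp add: perm_vec_def)
  also have "\<dots> = c ! j"
  proof (cases "j = i")
    case False
    then show ?thesis
    proof (cases "j < i")
      case True
      then show ?thesis using i c j' by (simp add: sig_def nth_del)
    next
      case F: False
      then obtain j0 where "j = Suc j0" using False by (cases j) auto
      then show ?thesis using i c j' F False by (simp add: sig_def nth_del)
    qed
  qed (simp add: sig_def)
  finally show "perm_vec n (sig i) (c ! i # del i c) ! j = c ! j" .
qed (simp add: perm_vec_def)

lemma lincomb_struct: "length x = m \<Longrightarrow> \<forall>g\<in>set G. length g = m \<Longrightarrow>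
  lincomb (Suc m) ((1 # x) # map (\<lambda>g. 0 # g) G) a = a 0 # lincomb m (x # G) a"
proof (rule nth_equalityI)
  fix j assume x: "length x = m" and G: "\<forall>g\<in>set G. length g = m"
    and j: "j < length (lincomb (Suc m) ((1 # x) # map (\<lambda>g. 0 # g) G) a)"
  show "lincomb (Suc m) ((1 # x) # map (\<lambda>g. 0 # g) G) a ! j = (a 0 # lincomb m (x # G) a) ! j"
  proof (cases j)
    case 0
    then show ?thesis by (simp only: nth_lincomb zero_less_Suc length_Cons length_map sum.lessThan_Suc_shift) simp
  next
    case (Suc j0)
    then have j0: "j0 < m" using j by simp
    have "lincomb (Suc m) ((1 # x) # map (\<lambda>g. 0 # g) G) a ! j =
       a 0 * x ! j0 + (\<Sum>l<length G. a (Suc l) * (G ! l ! j0))"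
      using Suc j0 by (simp only: nth_lincomb Suc_less_eq length_Cons length_map sum.lessThan_Suc_shift) simp
    also have "\<dots> = (a 0 # lincomb m (x # G) a) ! j"
      using Suc j0 by (simp only: nth_Cons_Suc nth_lincomb length_Cons sum.lessThan_Suc_shift) simp
    finally show ?thesis .
  qed
qed simp

lemma gen_code_struct: "length x = m \<Longrightarrow> \<forall>g\<in>set G. length g = m \<Longrightarrow>
  gen_code (Suc m) ((1 # x) # map (\<lambda>g. 0 # g) G) =
    (\<lambda>g. 0 # g) ` gen_code m G \<union> (\<lambda>g. 1 # vadd x g) ` gen_code m G"
proof -
  assume x: "length x = m" and G: "\<forall>g\<in>set G. length g = m"
  have "gen_code (Suc m) ((1 # x) # map (\<lambda>g. 0 # g) G) = (\<lambda>a. a 0 # lincomb m (x # G) a) ` UNIV"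
    unfolding gen_code_def using lincomb_struct[OF x G] by auto
  also have "\<dots> = (\<lambda>g. 0 # g) ` gen_code m G \<union> (\<lambda>g. 1 # vadd x g) ` gen_code m G"
  proof (rule set_eqI, rule iffI)
    fix y assume "y \<in> (\<lambda>a. a 0 # lincomb m (x # G) a) ` UNIV"
    then obtain a where y: "y = a 0 # lincomb m (x # G) a" by auto
    show "y \<in> (\<lambda>g. 0 # g) ` gen_code m G \<union> (\<lambda>g. 1 # vadd x g) ` gen_code m G"
      using y x bit_cases2[of "a 0"] by (auto simp: lincomb_Cons gen_code_def)
  next
    fix y assume "y \<in> (\<lambda>g. 0 # g) ` gen_code m G \<union> (\<lambda>g. 1 # vadd x g) ` gen_code m G"
    then obtain b and c :: bit where "y = (if c = 0 then 0 # lincomb m G b else 1 # vadd x (lincomb m G b))"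
      by (auto simp: gen_code_def) (metis zero_neq_one)+
    then have "y = (\<lambda>a. a 0 # lincomb m (x # G) a) (\<lambda>i. case i of 0 \<Rightarrow> c | Suc j \<Rightarrow> b j)"
      using x bit_cases2[of c] by (auto simp: lincomb_Cons)
    then show "y \<in> (\<lambda>a. a 0 # lincomb m (x # G) a) ` UNIV" by blast
  qed
  finally show ?thesis .
qed

theorem theorem3p6:
  fixes n k d :: nat and C' :: "bit list set"
  assumes "bin_code n k d C'" and "is_LCD n C'" and "odd_like_code C'"
  shows "\<exists>C d' G x. bin_code (n - 1) (k - 1) d' C \<and> d' \<ge> d \<and> is_LCD (n - 1) C \<and>
           is_gen_matrix (n - 1) G C \<and> x \<in> euclid_dual (n - 1) C \<and> even (hwt x) \<and>
           code_equiv n C' (gen_code n ((1 # x) # map (\<lambda>g. 0 # g) G))"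
proof -
  have lc: "lin_code n C'" and cardC': "card C' = 2 ^ k" and md: "k > 0 \<longrightarrow> min_dist n C' = d"
    using assms(1) by (auto simp: bin_code_def)
  have lcd: "is_LCD n C'" by fact
  have Cl: "\<And>c. c \<in> C' \<Longrightarrow> length c = n" using lc by (auto simp: lin_code_def)
  have z: "vzero n \<in> C'" and cl: "\<And>a b. a \<in> C' \<Longrightarrow> b \<in> C' \<Longrightarrow> vadd a b \<in> C'"
    using lc by (auto simp: lin_code_def)
  have finC': "finite C'" using lin_code_finite[OF lc] .
  obtain i v where i: "i < n" and vC: "v \<in> C'" and vi: "v ! i = 1" and hv: "\<forall>c\<in>C'. eip c v = c ! i"
    using odd_coord[OF lc lcd assms(3)] by blast
  have vl: "length v = n" using Cl[OF vC] .
  obtain m where nm: "n = Suc m" using i by (cases n) auto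
  then have m: "n - 1 = m" by simp
  define D where "D = {c \<in> C'. c ! i = 0}"
  define C where "C = del i ` D"
  define x where "x = del i v"
  have DC': "D \<subseteq> C'" by (auto simp: D_def)
  have Dl: "\<And>c. c \<in> D \<Longrightarrow> length c = n" using Cl DC' by auto
  have vaddi: "vadd v c ! i = 1 + c ! i" if "c \<in> C'" for c using Cl[OF that] vl i vi by simp
  have xl: "length x = m" using vl i nm by (simp add: x_def)
  
  have split1: "vadd v c \<in> D" if "c \<in> C'" "c ! i = 1" for c
    using that vaddi cl vC by (auto simp: D_def)
  have vvc: "vadd v (vadd v c) = c" if "c \<in> C'" for c using vadd_vadd_cancel[of v c] vl Cl[OF that] by simp
  have C'eq: "C' = D \<union> vadd v ` D"
  proof
    show "C' \<subseteq> D \<union> vadd v ` D"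
    proof
      fix c assume c: "c \<in> C'"
      show "c \<in> D \<union> vadd v ` D"
      proof (cases "c ! i = 0")
        case True then show ?thesis using c by (auto simp: D_def)
      next
        case False
        then have "c ! i = 1" by simp
        then have "vadd v c \<in> D" using split1 c by blast
        then show ?thesis using vvc[OF c] by (metis UnI2 image_eqI)
      qed
    qed
    show "D \<union> vadd v ` D \<subseteq> C'" using DC' cl vC by auto
  qed
  have disj: "D \<inter> vadd v ` D = {}" using vaddi by (auto simp: D_def)
  have injv: "inj_on (vadd v) D" by (rule inj_onI) (metis DC' subsetD vvc)
  have finD: "finite D" using finC' DC' finite_subset by blast
  have "card C' = card D + card D"
    using C'eq disj card_Un_disjoint[OF finD finite_imageI[OF finD] disj] card_image[OF injv] by simp
  then have cD2: "2 ^ k = 2 * card D" using cardC' by simp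
  then have k0: "k > 0" by (cases k) auto
  then have cardD: "card D = 2 ^ (k - 1)" using cD2 by (cases k) auto
  have injdel: "inj_on (del i) D"
    by (rule inj_onI) (rule del_inj[OF i], auto simp: D_def intro: Cl)
  have cardC: "card C = 2 ^ (k - 1)" using card_image[OF injdel] cardD by (simp add: C_def)
  have finC: "finite C" using finD by (simp add: C_def)
  
  have lcC: "lin_code m C"
    unfolding lin_code_def
  proof (intro conjI ballI)
    show "C \<subseteq> {v. length v = m}" using Dl i nm by (auto simp: C_def)
    have "vzero n \<in> D" using z i by (simp add: D_def)
    then show "vzero m \<in> C" using del_vzero[OF i] nm by (force simp: C_def)
    fix a b assume "a \<in> C" "b \<in> C"
    then obtain a' b' where ab: "a' \<in> D" "b' \<in> D" "a = del i a'" "b = del i b'" by (auto simp: C_def)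
    then have "vadd a' b' \<in> D" using cl Dl i by (auto simp: D_def)
    moreover have "vadd a b = del i (vadd a' b')" using ab del_vadd[OF i] Dl by simp
    ultimately show "vadd a b \<in> C" by (simp add: C_def)
  qed
  have Cl2: "\<And>g. g \<in> C \<Longrightarrow> length g = m" using lcC by (auto simp: lin_code_def)
  
  have eipD: "eip c' c = eip (del i c') (del i c)" if "c' \<in> D" "c \<in> D" for c c'
    using eip_del[OF i Dl[OF that(1)] Dl[OF that(2)]] that by (simp add: D_def)
  
  have lcdC: "is_LCD m C"
    unfolding is_LCD_def
  proof
    show "C \<inter> euclid_dual m C \<subseteq> {vzero m}"
    proof
      fix y assume y: "y \<in> C \<inter> euclid_dual m C"
      then obtain c where c: "c \<in> D" "y = del i c" by (auto simp: C_def)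
      have orthD: "eip c' c = 0" if "c' \<in> D" for c'
      proof -
        have "del i c' \<in> C" using that by (simp add: C_def)
        then have "eip (del i c') y = 0" using y by (auto simp: euclid_dual_def)
        then show ?thesis using eipD[OF that c(1)] c by simp
      qed
      have "c = vzero n"
      proof (rule LCD_zero[OF lcd])
        show "c \<in> C'" "length c = n" using c DC' Dl by auto
        show "\<forall>c'\<in>C'. eip c' c = 0"
        proof
          fix c' assume c': "c' \<in> C'"
          show "eip c' c = 0"
          proof (cases "c' ! i = 0")
            case True then show ?thesis using orthD c' by (simp add: D_def)
          next
            case False
            then have d'': "vadd v c' \<in> D" using split1 c' by simp
            have "eip c' c = eip c c'" using Cl c' Dl c by (simp add: eip_comm)
            also have "\<dots> = eip c (vadd v (vadd v c'))" using vvc[OF c'] by simp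
            also have "\<dots> = eip c v + eip c (vadd v c')"
              using eip_vadd[of c n v "vadd v c'"] Dl[OF c(1)] vl Cl[OF c'] by simp
            also have "\<dots> = 0"
              using hv c DC' orthD[OF d''] eip_comm[of c "vadd v c'"] Dl[OF c(1)] Dl[OF d'']
              by (auto simp: D_def)
            finally show ?thesis .
          qed
        qed
      qed
      then show "y \<in> {vzero m}" using c del_vzero[OF i] nm by simp
    qed
    show "{vzero m} \<subseteq> C \<inter> euclid_dual m C"
      using lcC Cl2 eip_vzero by (auto simp: lin_code_def euclid_dual_def)
  qed
  
  have xdual: "x \<in> euclid_dual m C"
    unfolding euclid_dual_def
  proof (intro CollectI conjI ballI)
    show "length x = m" by (rule xl)
    fix g assume "g \<in> C"
    then obtain c where c: "c \<in> D" "g = del i c" by (auto simp: C_def)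
    have "eip c v = eip g x + c ! i * v ! i" using eip_del[OF i Dl[OF c(1)] vl] c by (simp add: x_def)
    moreover have "eip c v = 0" using hv c by (auto simp: D_def)
    moreover have "c ! i = 0" using c by (simp add: D_def)
    ultimately show "eip g x = 0" by simp
  qed
  have evx: "even (hwt x)"
  proof -
    have "sum_list v = sum_list x + v ! i" using sum_list_del[of i v] vl i by (simp add: x_def)
    moreover have "sum_list v = 1" using hv vC vi by (simp flip: eip_self)
    ultimately have "sum_list x = 0" using vi by (simp add: bit_add_eq0)
    then show ?thesis by (simp add: even_hwt)
  qed
  
  obtain G where G: "is_gen_matrix m G C" using gen_matrix_exists[OF lcC] by blast
  have Gl: "\<forall>g\<in>set G. length g = m" using G by (simp add: is_gen_matrix_def)
  have gC: "gen_code m G = C" using G by (simp add: is_gen_matrix_def)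
  
  define d' where "d' = (if k > 1 then min_dist m C else d)"
  have bc: "bin_code m (k - 1) d' C" using lcC cardC by (simp add: bin_code_def d'_def)
  have dd: "d' \<ge> d"
  proof (cases "k > 1")
    case True
    have "C - {vzero m} \<noteq> {}"
    proof
      assume "C - {vzero m} = {}"
      then have "C \<subseteq> {vzero m}" by auto
      then have "card C \<le> 1" using card_mono[of "{vzero m}" C] by simp
      then show False using cardC True one_less_power[of "2::nat" "k - 1"] by simp
    qed
    then have ne: "hwt ` (C - {vzero m}) \<noteq> {}" by simp
    have sub: "hwt ` (C - {vzero m}) \<subseteq> hwt ` (C' - {vzero n})"
    proof
      fix w assume "w \<in> hwt ` (C - {vzero m})"
      then obtain c where c: "c \<in> D" "del i c \<noteq> vzero m" "w = hwt (del i c)" by (auto simp: C_def)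
      have "c \<noteq> vzero n" using c del_vzero[OF i] nm by auto
      moreover have "w = hwt c" using c hwt_del[of i c] Dl i by (simp add: D_def)
      ultimately show "w \<in> hwt ` (C' - {vzero n})" using c DC' by auto
    qed
    have "Min (hwt ` (C' - {vzero n})) \<le> Min (hwt ` (C - {vzero m}))"
      by (rule Min_antimono[OF sub ne]) (use finC' in simp)
    then show ?thesis using True md k0 by (simp add: d'_def min_dist_def)
  qed (simp add: d'_def)
  
  have gen_eq: "gen_code n ((1 # x) # map (\<lambda>g. 0 # g) G) = (\<lambda>c. c ! i # del i c) ` C'"
  proof -
    have "gen_code n ((1 # x) # map (\<lambda>g. 0 # g) G) = (\<lambda>g. 0 # g) ` C \<union> (\<lambda>g. 1 # vadd x g) ` C"
      using gen_code_struct[OF xl Gl] nm gC by simp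
    also have "\<dots> = (\<lambda>c. c ! i # del i c) ` C'"
    proof
      show "(\<lambda>g. 0 # g) ` C \<union> (\<lambda>g. 1 # vadd x g) ` C \<subseteq> (\<lambda>c. c ! i # del i c) ` C'"
      proof
        fix y assume "y \<in> (\<lambda>g. 0 # g) ` C \<union> (\<lambda>g. 1 # vadd x g) ` C"
        then obtain c where c: "c \<in> D" and "y = 0 # del i c \<or> y = 1 # vadd x (del i c)"
          by (auto simp: C_def)
        then consider "y = 0 # del i c" | "y = 1 # vadd x (del i c)" by blast
        then show "y \<in> (\<lambda>c. c ! i # del i c) ` C'"
        proof cases
          case 1 then show ?thesis using c DC' by (force simp: D_def)
        next
          case 2
          have "vadd v c \<in> C'" using c DC' cl vC by auto
          moreover have "vadd v c ! i = 1" using vaddi c DC' by (auto simp: D_def)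
          moreover have "del i (vadd v c) = vadd x (del i c)" using del_vadd[OF i vl Dl[OF c]] by (simp add: x_def)
          ultimately show ?thesis using 2 by (metis (no_types, lifting) image_eqI)
        qed
      qed
      show "(\<lambda>c. c ! i # del i c) ` C' \<subseteq> (\<lambda>g. 0 # g) ` C \<union> (\<lambda>g. 1 # vadd x g) ` C"
      proof
        fix y assume "y \<in> (\<lambda>c. c ! i # del i c) ` C'"
        then obtain c where c: "c \<in> C'" "y = c ! i # del i c" by auto
        show "y \<in> (\<lambda>g. 0 # g) ` C \<union> (\<lambda>g. 1 # vadd x g) ` C"
        proof (cases "c ! i = 0")
          case True
          then have "c \<in> D" using c by (simp add: D_def)
          then show ?thesis using c True by (auto simp: C_def)
        next
          case False
          then have ci: "c ! i = 1" by simp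
          then have d: "vadd v c \<in> D" using split1 c by simp
          have "del i c = del i (vadd v (vadd v c))" using vvc[OF c(1)] by simp
          also have "\<dots> = vadd x (del i (vadd v c))" using del_vadd[OF i vl Dl[OF d]] by (simp add: x_def)
          finally have "y = 1 # vadd x (del i (vadd v c))" using c ci by simp
          then show ?thesis using d by (auto simp: C_def)
        qed
      qed
    qed
    finally show ?thesis .
  qed
  have "code_equiv n C' (gen_code n ((1 # x) # map (\<lambda>g. 0 # g) G))"
    unfolding code_equiv_def
  proof (intro exI conjI)
    show "sig i permutes {..<n}" using sig_permutes[OF i] .
    have "perm_vec n (sig i) ` (\<lambda>c. c ! i # del i c) ` C' = C'"
      using perm_sig[OF i] Cl by (simp add: image_image)
    then show "C' = perm_vec n (sig i) ` gen_code n ((1 # x) # map (\<lambda>g. 0 # g) G)"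
      using gen_eq by simp
  qed
  then show ?thesis using bc dd lcdC G xdual evx m by blast
qed

end
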